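(* Let $A\in\mathbb{R}^{n\times d}$, $b\in\mathbb{R}^n$, and suppose $Ax=b$ admits a solution $x^*$. Let $w$ be a random variable in $\mathbb{R}^d$, and let $\mathcal{L}(w) = \mathrm{span}\lbrace z\in\mathbb{R}^n : \mathbb{P}[z'Aw=0]=1\rbrace$ and $\mathcal{C}(w) = \mathcal{L}(w)^\perp$. Let $\lbrace w_\ell:\ell\geq0\rbrace$ be random variables in $\mathbb{R}^d$ with $\mathbb{P}[Aw_\ell\in\mathcal{C}(w)]=1$ for all $\ell$. Let $x_0\in\mathbb{R}^d$ be arbitrary, $$x_{k+1} = x_k + \frac{w_kw_k'A'(b-Ax_k)}{\|Aw_k\|_2^2},$$ and $r_k = Ax_k - b$ for $k\geq0$. Define $\tau_0 = 0$, $\tau_1 = \min\lbrace k\geq0 : \mathrm{span}\lbrace Aw_0,\ldots,Aw_k\rbrace = \mathcal{C}(w)\rbrace$, and for $\ell\geq2$, $\tau_\ell = \min\lbrace k>\tau_{\ell-1} : \mathrm{span}\lbrace Aw_{\tau_{\ell-1}+1},\ldots,Aw_k\rbrace = \mathcal{C}(w)\rbrace$ if $\tau_{\ell-1}<\infty$, else $\tau_\ell = \infty$. For finite stopping times, let $\mathcal{F}_\ell$ be the set of matrices whose columns form a maximal linearly independent subset of $\lbrace Aw_{\tau_{\ell-1}+1}/\|Aw_{\tau_{\ell-1}+1}\|_2,\ldots,Aw_{\tau_\ell}/\|Aw_{\tau_\ell}\|_2\rbrace$, and $\gamma_\ell = 1-\min_{F\in\mathcal{F}_\ell}\det(F'F)$.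 Then $\gamma_\ell\in[0,1)$ and, for any $\ell$, on the event $\lbrace\tau_\ell<\infty\rbrace$, $$\|r_{\tau_\ell+1} - P_{\mathcal{L}(w)}r_0\|_2^2 \leq \Big(\prod_{j=1}^\ell\gamma_j\Big)\|P_{\mathcal{C}(w)}r_0\|_2^2.$$ Therefore, for any $k$, $\|r_k - P_{\mathcal{L}(w)}r_0\|_2^2 \leq \big(\prod_{j=1}^{L(k)}\gamma_j\big)\|P_{\mathcal{C}(w)}r_0\|_2^2$, where $L(k) = \max\lbrace\ell : k\geq\tau_\ell+1\rbrace$, on the event $\lbrace\tau_{L(k)}<\infty\rbrace$.
   Context: $P_W$ is orthogonal projection onto $W$; $A'$ is the transpose. The iteration presupposes $Aw_k\neq0$. *)

theory Defs
  imports "HOL-Probability.Probability"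
begin

definition Lsp :: "real^'d^'n \<Rightarrow> 's measure \<Rightarrow> ('s \<Rightarrow> real^'d) \<Rightarrow> (real^'n) set" where
  "Lsp A M w = span {z. measure M {\<omega> \<in> space M. z \<bullet> (A *v w \<omega>) = 0} = 1}"

definition Csp :: "real^'d^'n \<Rightarrow> 's measure \<Rightarrow> ('s \<Rightarrow> real^'d) \<Rightarrow> (real^'n) set" where
  "Csp A M w = {y. \<forall>z \<in> Lsp A M w. z \<bullet> y = 0}"

definition oproj :: "'a::real_inner set \<Rightarrow> 'a \<Rightarrow> 'a" where
  "oproj W x = (THE p. p \<in> W \<and> (\<forall>y\<in>W. (x - p) \<bullet> y = 0))"

fun kz_iter :: "real^'d^'n \<Rightarrow> real^'n \<Rightarrow> real^'d \<Rightarrow> (nat \<Rightarrow> real^'d) \<Rightarrow> nat \<Rightarrow> real^'d" where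
  "kz_iter A b x0 w 0 = x0"
| "kz_iter A b x0 w (Suc k) =
     (let xk = kz_iter A b x0 w k
      in xk + ((w k \<bullet> (transpose A *v (b - A *v xk))) / (norm (A *v w k))^2) *\<^sub>R w k)"

text \<open>Stopping times tau_l for the sequence v k = A w_k and target subspace C.\<close>
fun stop_time :: "'a::real_vector set \<Rightarrow> (nat \<Rightarrow> 'a) \<Rightarrow> nat \<Rightarrow> enat" where
  "stop_time C v 0 = 0"
| "stop_time C v (Suc 0) =
     (if \<exists>k. span (v ` {0..k}) = C then enat (LEAST k. span (v ` {0..k}) = C) else \<infinity>)"
| "stop_time C v (Suc (Suc l)) =
     (case stop_time C v (Suc l) of
        enat t \<Rightarrow> (if \<exists>k. t < k \<and> span (v ` {t<..k}) = C
                   then enat (LEAST k. t < k \<and> span (v ` {t<..k}) = C) else \<infinity>)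
      | \<infinity> \<Rightarrow> \<infinity>)"

definition blk_start :: "'a::real_vector set \<Rightarrow> (nat \<Rightarrow> 'a) \<Rightarrow> nat \<Rightarrow> nat" where
  "blk_start C v l = (if l = 1 then 0 else the_enat (stop_time C v (l - 1)) + 1)"

text \<open>det(F'F) for the matrix F with columns us (Leibniz expansion of the Gram determinant).\<close>
definition gram_det :: "'a::real_inner list \<Rightarrow> real" where
  "gram_det us = (\<Sum>p | p permutes {..<length us}.
       of_int (sign p) * (\<Prod>i<length us. us ! i \<bullet> us ! (p i)))"

text \<open>Matrices (column lists) whose columns form a maximal linearly independent subset of S.\<close>
definition max_indep_cols :: "'a::real_vector set \<Rightarrow> 'a list set" where
  "max_indep_cols S = {us. distinct us \<and> set us \<subseteq> S \<and> independent (set us) \<and>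
      (\<forall>T. set us \<subseteq> T \<and> T \<subseteq> S \<and> independent T \<longrightarrow> T = set us)}"

definition gamma_blk :: "'a::real_inner set \<Rightarrow> (nat \<Rightarrow> 'a) \<Rightarrow> nat \<Rightarrow> real" where
  "gamma_blk C v l = 1 - Min (gram_det ` max_indep_cols
      ((\<lambda>j. v j /\<^sub>R norm (v j)) ` {blk_start C v l .. the_enat (stop_time C v l)}))"

end

theory Submission
  imports Defs "Jordan_Normal_Form.Determinant"
begin

no_notation scalar_prod (infix "\<bullet>" 70)


definition Gm :: "'a::real_inner list \<Rightarrow> real mat" where
  "Gm us = mat (length us) (length us) (\<lambda>(i,j). inner (us!i) (us!j))"

lemma gram_det_Gm: "gram_det us = det (Gm us)"
  unfolding gram_det_def det_def Gm_def by (simp add: atLeast0LessThan)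

lemma det_1x1: "det (mat 1 1 f) = (f (0,0) :: 'a::comm_ring_1)"
proof -
  have "mat 1 1 f \<in> carrier_mat 1 1" by simp
  moreover have "upper_triangular (mat 1 1 f)" by (auto simp: upper_triangular_def)
  ultimately show ?thesis by (subst det_upper_triangular) (auto simp: diag_mat_def)
qed

lemma span_list_repr:
  fixes F :: "'a::real_vector list"
  assumes "x \<in> span (set F)"
  shows "\<exists>c. x = (\<Sum>i<length F. c i *\<^sub>R F!i)"
  using assms
proof (induction F arbitrary: x rule: rev_induct)
  case Nil then show ?case by simp
next
  case (snoc a F)
  from snoc.prems obtain k where k: "x - k *\<^sub>R a \<in> span (set F)"
    by (auto simp: span_breakdown_eq)
  from snoc.IH[OF k] obtain c where c: "x - k *\<^sub>R a = (\<Sum>i<length F. c i *\<^sub>R F!i)" by blast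
  let ?c = "c(length F := k)"
  have "(\<Sum>i<length (F@[a]). ?c i *\<^sub>R (F@[a])!i) = (\<Sum>i<length F. c i *\<^sub>R F!i) + k *\<^sub>R a"
    by (simp add: nth_append)
  also have "\<dots> = x" using c by (simp add: algebra_simps)
  finally show ?case by metis
qed

lemma gram_det_snoc_orth:
  fixes F :: "'a::real_inner list"
  assumes "\<forall>f\<in>set F. inner f t = 0"
  shows "gram_det (F @ [t]) = gram_det F * inner t t"
proof -
  let ?n = "length F"
  have "Gm (F @ [t]) = four_block_mat (Gm F) (0\<^sub>m ?n 1) (mat 1 ?n (\<lambda>(i,j). inner t (F!j))) (mat 1 1 (\<lambda>_. inner t t))"
    using assms by (intro eq_matI) (auto simp: Gm_def four_block_mat_def nth_append Let_def inner_commute)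
  then have "det (Gm (F @ [t])) = det (Gm F) * det (mat 1 1 (\<lambda>_. inner t t))"
    by (simp add: det_four_block_mat_upper_right_zero[of _ ?n _ 1] Gm_def)
  then show ?thesis using det_1x1[of "\<lambda>_. inner t t"] by (simp add: gram_det_Gm)
qed

lemma gram_det_snoc_shift:
  fixes F :: "'a::real_inner list"
  assumes "s \<in> span (set F)"
  shows "gram_det (F @ [s + t]) = gram_det (F @ [t])"
proof -
  let ?n = "length F"
  let ?N = "Suc ?n"
  obtain c where c: "s = (\<Sum>i<?n. c i *\<^sub>R F!i)" using span_list_repr[OF assms] by blast
  define W where "W = F @ [t]"
  define U where "U = F @ [s + t]"
  define E :: "real mat" where "E = mat ?N ?N (\<lambda>(i,j). if i = j then 1 else if j = ?n \<and> i < ?n then c i else 0)"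
  have E: "E \<in> carrier_mat ?N ?N" by (simp add: E_def)
  have U: "\<And>j. j < ?N \<Longrightarrow> U!j = (\<Sum>a<?N. E$$(a,j) *\<^sub>R W!a)"
  proof -
    fix j assume j: "j < ?N"
    show "U!j = (\<Sum>a<?N. E$$(a,j) *\<^sub>R W!a)"
    proof (cases "j = ?n")
      case True
      have "(\<Sum>a<?N. E$$(a,j) *\<^sub>R W!a) = (\<Sum>a<?n. E$$(a,j) *\<^sub>R W!a) + E$$(?n,j) *\<^sub>R W!?n"
        by simp
      also have "\<dots> = s + t" using True unfolding c
        by (simp add: E_def W_def nth_append)
      finally show ?thesis using True by (simp add: U_def)
    next
      case False
      then have jn: "j < ?n" using j by simp
      have "(\<Sum>a<?N. E$$(a,j) *\<^sub>R W!a) = (\<Sum>a<?N. (if a = j then W!j else 0))"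
        using jn by (intro sum.cong) (auto simp: E_def)
      also have "\<dots> = W!j" using j by simp
      finally show ?thesis using jn by (simp add: U_def W_def nth_append)
    qed
  qed
  have GmU: "Gm U = transpose_mat E * Gm W * E"
  proof (rule eq_matI)
    fix i j assume i: "i < dim_row (transpose_mat E * Gm W * E)" and j: "j < dim_col (transpose_mat E * Gm W * E)"
    then have i': "i < ?N" and j': "j < ?N" using E by (auto simp: W_def Gm_def)
    have "Gm U $$ (i,j) = inner (U!i) (U!j)" using i' j' by (simp add: Gm_def U_def)
    also have "\<dots> = (\<Sum>a<?N. \<Sum>b<?N. E$$(a,i) * E$$(b,j) * inner (W!a) (W!b))"
      unfolding U[OF i'] U[OF j'] inner_sum_left inner_sum_right
      by (simp add: sum_distrib_left mult_ac del: sum.lessThan_Suc)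
         (subst sum.swap, simp add: mult_ac del: sum.lessThan_Suc)
    also have "\<dots> = (\<Sum>b<?N. \<Sum>a<?N. E$$(a,i) * E$$(b,j) * inner (W!a) (W!b))"
      by (rule sum.swap)
    also have "\<dots> = (\<Sum>b<?N. (\<Sum>a<?N. E$$(a,i) * inner (W!a) (W!b)) * E$$(b,j))"
      by (simp add: sum_distrib_right sum_distrib_left mult_ac del: sum.lessThan_Suc)
    also have "\<dots> = (transpose_mat E * Gm W * E) $$ (i,j)"
      using i' j' E by (simp add: scalar_prod_def Gm_def W_def atLeast0LessThan sum_distrib_right)
    finally show "Gm U $$ (i,j) = (transpose_mat E * Gm W * E) $$ (i,j)" .
  qed (use E in \<open>auto simp: Gm_def U_def W_def\<close>)
  have GW: "Gm W \<in> carrier_mat ?N ?N" by (simp add: Gm_def W_def)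
  have detE: "det E = 1"
  proof -
    have "upper_triangular E" by (auto simp: upper_triangular_def E_def)
    then have "det E = prod_list (diag_mat E)" using E by (rule det_upper_triangular)
    also have "diag_mat E = map (\<lambda>_. 1) [0..<?N]" unfolding diag_mat_def E_def by (intro map_cong) auto
    finally show ?thesis by (simp add: prod_list_zero_iff map_replicate_const)
  qed
  have "det (transpose_mat E * Gm W * E) = det (transpose_mat E) * det (Gm W) * det E"
    using E GW by (simp add: det_mult[of _ ?N])
  also have "\<dots> = det (Gm W)" using det_transpose[OF E] detE by simp
  finally show ?thesis unfolding gram_det_Gm GmU[folded U_def] U_def W_def
    using GmU U_def W_def by metis
qed

lemma gram_det_snoc:
  fixes F :: "'a::real_inner list"
  assumes "s \<in> span (set F)" "\<forall>w\<in>span (set F). inner w t = 0"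
  shows "gram_det (F @ [s + t]) = gram_det F * inner t t"
proof -
  have "\<forall>f\<in>set F. inner f t = 0" using assms(2) span_base by blast
  then show ?thesis using gram_det_snoc_shift[OF assms(1)] gram_det_snoc_orth by metis
qed

lemma gram_det_Nil: "gram_det [] = 1"
  by (simp add: gram_det_def)

lemma gram_det_bounds:
  fixes F :: "'a::euclidean_space list"
  assumes "distinct F" "independent (set F)" "\<forall>f\<in>set F. norm f = 1"
  shows "0 < gram_det F \<and> gram_det F \<le> 1"
  using assms
proof (induction F rule: rev_induct)
  case Nil then show ?case by (simp add: gram_det_Nil)
next
  case (snoc u F)
  have uF: "u \<notin> set F" using snoc.prems(1) by simp
  have indF: "independent (set F)" and uspan: "u \<notin> span (set F)"
    using snoc.prems(2) uF by (auto simp: independent_insert)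
  have IH: "0 < gram_det F \<and> gram_det F \<le> 1" using snoc by (auto simp: indF)
  obtain s t where s: "s \<in> span (set F)" and t: "\<And>w. w \<in> span (set F) \<Longrightarrow> real_inner_class.orthogonal t w"
    and u: "u = s + t" by (rule orthogonal_subspace_decomp_exists[of "set F" u]) blast
  have t': "\<forall>w\<in>span (set F). inner w t = 0" using t by (simp add: real_inner_class.orthogonal_def inner_commute)
  have gd: "gram_det (F @ [u]) = gram_det F * inner t t" using gram_det_snoc[OF s t'] u by simp
  have "t \<noteq> 0" using uspan s u by auto
  then have tpos: "0 < inner t t" by simp
  have "inner s t = 0" using t' s by blast
  then have "inner u u = inner s s + inner t t" using u by (simp add: algebra_simps inner_commute)
  moreover have "inner u u = 1" using snoc.prems(3) by (simp add: dot_square_norm)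
  moreover have "0 \<le> inner s s" by simp
  ultimately have "inner t t \<le> 1" by linarith
  then show ?case using IH tpos gd by (simp add: mult_le_one)
qed



definition prj :: "'a::real_inner \<Rightarrow> 'a \<Rightarrow> 'a" where
  "prj u z = z - inner u z *\<^sub>R u"

definition run :: "'a::real_inner list \<Rightarrow> 'a \<Rightarrow> 'a" where
  "run us z = fold prj us z"

lemma run_Nil[simp]: "run [] z = z" by (simp add: run_def)
lemma run_Cons: "run (u # us) z = run us (prj u z)" by (simp add: run_def)
lemma run_snoc: "run (us @ [u]) z = prj u (run us z)" by (simp add: run_def)

lemma norm_prj:
  assumes "norm u = 1"
  shows "(norm (prj u z))\<^sup>2 = (norm z)\<^sup>2 - (inner u z)\<^sup>2"
proof -
  have uu: "inner u u = 1" using assms by (simp add: dot_square_norm)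
  show ?thesis unfolding prj_def power2_norm_eq_inner
    by (simp add: inner_diff_left inner_diff_right uu inner_commute power2_eq_square algebra_simps)
qed

lemma norm_prj_le: assumes "norm u = 1" shows "norm (prj u z) \<le> norm z"
proof -
  have "(norm (prj u z))\<^sup>2 \<le> (norm z)\<^sup>2" using norm_prj[of u z] assms by simp
  then show ?thesis by (rule power2_le_imp_le) simp
qed

lemma run_norm_le: "\<forall>u\<in>set us. norm u = 1 \<Longrightarrow> norm (run us z) \<le> norm z"
proof (induction us arbitrary: z)
  case Nil then show ?case by simp
next
  case (Cons u us)
  then have "norm (run us (prj u z)) \<le> norm (prj u z)" by simp
  also have "\<dots> \<le> norm z" using Cons.prems by (simp add: norm_prj_le)
  finally show ?case by (simp add: run_Cons)
qed

lemma run_add_orth: "\<forall>u\<in>set us. inner u f = 0 \<Longrightarrow> run us (a + f) = run us a + f"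
proof (induction us arbitrary: a)
  case Nil then show ?case by simp
next
  case (Cons u us)
  have "prj u (a + f) = prj u a + f" using Cons.prems by (simp add: prj_def inner_add_right algebra_simps)
  then show ?case using Cons by (simp add: run_Cons)
qed

lemma run_span: "set us \<subseteq> T \<Longrightarrow> a \<in> span T \<Longrightarrow> run us a \<in> span T"
proof (induction us arbitrary: a)
  case Nil then show ?case by simp
next
  case (Cons u us)
  have "prj u a \<in> span T" using Cons.prems by (simp add: prj_def span_diff span_scale span_base)
  then show ?case using Cons by (simp add: run_Cons)
qed

lemma key_ineq:
  fixes g d A p sig k :: real
  assumes "0 \<le> g" "g \<le> 1" "0 \<le> d" "d \<le> 1" "0 \<le> A" "0 \<le> p" "A \<le> (1 - g) * p"
    "sig\<^sup>2 \<le> (1 - d) * A"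
  shows "A + k\<^sup>2 * d - (sig + k * d)\<^sup>2 \<le> (1 - g * d) * (p + k\<^sup>2 * d)"
proof (cases "g = 1")
  case True
  then have "A = 0" using assms by simp
  then have "sig\<^sup>2 \<le> 0" using assms(8) by simp
  then have "sig = 0" by simp
  have e: "(1 - g * d) * (p + k\<^sup>2 * d) - (A + k\<^sup>2 * d - (sig + k * d)\<^sup>2) = (1 - d) * p"
    using True \<open>A = 0\<close> \<open>sig = 0\<close> by (simp add: power2_eq_square algebra_simps)
  have "0 \<le> (1 - d) * p" using assms by simp
  then show ?thesis using e by linarith
next
  case False
  define q where "q = 1 - g"
  have q: "0 < q" using False assms unfolding q_def by simp
  define Y where "Y = k\<^sup>2 * d"
  define phi where "phi = k * d"
  have phi2: "phi\<^sup>2 = d * Y" unfolding phi_def Y_def by (simp add: power2_eq_square)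
  have gd: "0 \<le> 1 - g * d" using assms by (simp add: mult_le_one)
  have h1: "q * ((1 - g * d) * p) \<ge> (1 - g * d) * A"
    using mult_left_mono[OF assms(7) gd] unfolding q_def by (simp add: algebra_simps)
  have h2: "g * ((1 - d) * A) \<ge> g * sig\<^sup>2" using mult_left_mono[OF assms(8) assms(1)] by simp
  have "q * ((1 - g * d) * (p + Y) - (A + Y - (sig + phi)\<^sup>2))
      = q * ((1 - g * d) * p) - q * A - q * g * (d * Y) + q * (sig + phi)\<^sup>2"
    by (simp add: algebra_simps)
  also have "\<dots> \<ge> (1 - g * d) * A - q * A - q * g * phi\<^sup>2 + q * (sig + phi)\<^sup>2"
    using h1 phi2 by simp
  also have "(1 - g * d) * A - q * A - q * g * phi\<^sup>2 + q * (sig + phi)\<^sup>2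
      = g * ((1 - d) * A) - q * g * phi\<^sup>2 + q * (sig + phi)\<^sup>2"
    unfolding q_def by (simp add: algebra_simps)
  also have "\<dots> \<ge> g * sig\<^sup>2 - q * g * phi\<^sup>2 + q * (sig + phi)\<^sup>2" using h2 by simp
  also have "g * sig\<^sup>2 - q * g * phi\<^sup>2 + q * (sig + phi)\<^sup>2 = (sig + q * phi)\<^sup>2"
    unfolding q_def by (simp add: power2_eq_square algebra_simps)
  finally have "0 \<le> q * ((1 - g * d) * (p + Y) - (A + Y - (sig + phi)\<^sup>2))"
    by (meson order_trans zero_le_power2)
  then have "0 \<le> (1 - g * d) * (p + Y) - (A + Y - (sig + phi)\<^sup>2)"
    using q by (simp add: zero_le_mult_iff)
  then show ?thesis unfolding Y_def phi_def by simp
qed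

lemma span_insert_cong: "span S = span T \<Longrightarrow> span (insert a S) = span (insert a T)"
  by (auto simp: span_breakdown_eq)

lemma meany:
  fixes us :: "'a::euclidean_space list"
  assumes "\<forall>u\<in>set us. norm u = 1"
  shows "\<exists>F. distinct F \<and> set F \<subseteq> set us \<and> independent (set F) \<and> span (set F) = span (set us) \<and>
    (\<forall>x\<in>span (set us). (norm (run us x))\<^sup>2 \<le> (1 - gram_det F) * (norm x)\<^sup>2)"
  using assms
proof (induction us rule: rev_induct)
  case Nil
  show ?case by (rule exI[of _ "[]"]) (simp add: gram_det_Nil independent_empty)
next
  case (snoc u us)
  have un: "norm u = 1" and usn: "\<forall>u\<in>set us. norm u = 1" using snoc.prems by auto
  obtain F where F: "distinct F" "set F \<subseteq> set us" "independent (set F)" "span (set F) = span (set us)"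
    and Fb: "\<forall>x\<in>span (set us). (norm (run us x))\<^sup>2 \<le> (1 - gram_det F) * (norm x)\<^sup>2"
    using snoc.IH[OF usn] by blast
  have gF: "0 < gram_det F" "gram_det F \<le> 1" using gram_det_bounds[OF F(1,3)] F(2) usn by auto
  show ?case
  proof (cases "u \<in> span (set us)")
    case True
    have sp: "span (set (us @ [u])) = span (set us)" using True by (simp add: span_redundant)
    show ?thesis
    proof (rule exI[of _ F], intro conjI ballI)
      fix x assume x: "x \<in> span (set (us @ [u]))"
      then have x': "x \<in> span (set us)" using sp by simp
      have "(norm (run (us @ [u]) x))\<^sup>2 \<le> (norm (run us x))\<^sup>2"
        unfolding run_snoc using norm_prj_le[OF un] by (simp add: power_mono)
      also have "\<dots> \<le> (1 - gram_det F) * (norm x)\<^sup>2" using Fb x' by blast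
      finally show "(norm (run (us @ [u]) x))\<^sup>2 \<le> (1 - gram_det F) * (norm x)\<^sup>2" .
    qed (use F sp in auto)
  next
    case False
    obtain s f where s: "s \<in> span (set us)" and fo: "\<And>w. w \<in> span (set us) \<Longrightarrow> real_inner_class.orthogonal f w"
      and u: "u = s + f" by (rule orthogonal_subspace_decomp_exists[of "set us" u]) blast
    have fo': "\<forall>w\<in>span (set us). inner w f = 0" using fo by (simp add: real_inner_class.orthogonal_def inner_commute)
    define d where "d = inner f f"
    have gd: "gram_det (F @ [u]) = gram_det F * d"
      using gram_det_snoc[of s F f] s fo' F(4) u d_def by simp
    have sf: "inner s f = 0" using fo' s by blast
    have uu: "inner u u = 1" using un by (simp add: dot_square_norm)
    have ss: "inner s s = 1 - d" using uu sf unfolding u d_def by (simp add: algebra_simps inner_commute)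
    have d0: "0 \<le> d" unfolding d_def by simp
    have d1: "d \<le> 1" using ss inner_ge_zero[of s] by linarith
    have sp: "span (set (F @ [u])) = span (set (us @ [u]))" using span_insert_cong[OF F(4), of u] by simp
    show ?thesis
    proof (rule exI[of _ "F @ [u]"], intro conjI ballI)
      show "distinct (F @ [u])" using F(1,2) False span_base by auto
      show "set (F @ [u]) \<subseteq> set (us @ [u])" using F(2) by auto
      show "independent (set (F @ [u]))" using F(3,4) False by (simp add: independent_insert)
      show "span (set (F @ [u])) = span (set (us @ [u]))" by (rule sp)
      fix x assume x: "x \<in> span (set (us @ [u]))"
      then obtain k where k: "x - k *\<^sub>R u \<in> span (set us)" by (auto simp: span_breakdown_eq)
      define x' where "x' = x - k *\<^sub>R u + k *\<^sub>R s"
      have x'S: "x' \<in> span (set us)" unfolding x'_def using k s by (simp add: span_add span_scale)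
      have xdec: "x = x' + k *\<^sub>R f" unfolding x'_def u by (simp add: algebra_simps)
      have orth_us: "\<forall>v\<in>set us. inner v (k *\<^sub>R f) = 0" using fo' span_base by auto
      define a where "a = run us x'"
      have aS: "a \<in> span (set us)" unfolding a_def using x'S run_span by blast
      have runx: "run (us @ [u]) x = prj u (a + k *\<^sub>R f)"
        unfolding run_snoc xdec a_def using run_add_orth[OF orth_us] by simp
      have af: "inner a f = 0" using fo' aS by blast
      have x'f: "inner x' f = 0" using fo' x'S by blast
      define A where "A = (norm a)\<^sup>2"
      define p where "p = (norm x')\<^sup>2"
      define sig where "sig = inner s a"
      have Ab: "A \<le> (1 - gram_det F) * p" using Fb x'S unfolding A_def p_def a_def by blast
      have sig2: "sig\<^sup>2 \<le> (1 - d) * A"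
      proof -
        have "sig\<^sup>2 \<le> ((norm s) * (norm a))\<^sup>2" unfolding sig_def
          using power_mono[OF Cauchy_Schwarz_ineq2[of s a] abs_ge_zero, of 2] by (simp add: power_mult_distrib)
        also have "\<dots> = (1 - d) * A" unfolding A_def using ss by (simp add: power_mult_distrib dot_square_norm)
        finally show ?thesis .
      qed
      have nz: "(norm (a + k *\<^sub>R f))\<^sup>2 = A + k\<^sup>2 * d"
        unfolding A_def d_def power2_norm_eq_inner using af
        by (simp add: inner_add_left inner_add_right inner_commute power2_eq_square algebra_simps)
      have uz: "inner u (a + k *\<^sub>R f) = sig + k * d"
        unfolding u sig_def d_def using af sf
        by (simp add: inner_add_left inner_add_right inner_commute)
      have nx: "(norm x)\<^sup>2 = p + k\<^sup>2 * d"
        unfolding xdec p_def d_def power2_norm_eq_inner using x'f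
        by (simp add: inner_add_left inner_add_right inner_commute power2_eq_square algebra_simps)
      have "(norm (run (us @ [u]) x))\<^sup>2 = A + k\<^sup>2 * d - (sig + k * d)\<^sup>2"
        unfolding runx norm_prj[OF un] nz uz ..
      also have "\<dots> \<le> (1 - gram_det F * d) * (p + k\<^sup>2 * d)"
        by (rule key_ineq) (use gF d0 d1 Ab sig2 in \<open>auto simp: A_def p_def\<close>)
      finally show "(norm (run (us @ [u]) x))\<^sup>2 \<le> (1 - gram_det (F @ [u])) * (norm x)\<^sup>2"
        unfolding gd nx .
    qed
  qed
qed



lemma oproj_unique:
  fixes W :: "'a::euclidean_space set"
  assumes "subspace W" "p \<in> W" "\<forall>y\<in>W. inner (x - p) y = 0"
  shows "oproj W x = p"
  unfolding oproj_def
proof (rule the_equality)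
  show "p \<in> W \<and> (\<forall>y\<in>W. inner (x - p) y = 0)" using assms by blast
next
  fix q assume q: "q \<in> W \<and> (\<forall>y\<in>W. inner (x - q) y = 0)"
  have "q - p \<in> W" using q assms by (simp add: subspace_diff)
  then have "inner (x - q) (q - p) = 0" "inner (x - p) (q - p) = 0" using q assms by blast+
  then have "inner (q - p) (q - p) = 0" by (simp add: inner_diff_left inner_diff_right inner_commute)
  then show "q = p" by simp
qed

lemma oproj_exists:
  fixes W :: "'a::euclidean_space set"
  assumes "subspace W"
  shows "oproj W x \<in> W \<and> (\<forall>y\<in>W. inner (x - oproj W x) y = 0)"
proof -
  obtain p z where p: "p \<in> span W" and z: "\<And>w. w \<in> span W \<Longrightarrow> real_inner_class.orthogonal z w"
    and x: "x = p + z" by (rule orthogonal_subspace_decomp_exists[of W x]) blast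
  have pW: "p \<in> W" using p assms by (metis span_eq_iff)
  have o: "\<forall>y\<in>W. inner (x - p) y = 0" using z x span_base by (auto simp: real_inner_class.orthogonal_def)
  show ?thesis using oproj_unique[OF assms pW o] pW o by simp
qed

lemma orth_subspace: "subspace {y::'a::real_inner. \<forall>z\<in>L. inner z y = 0}"
  by (auto simp: subspace_def inner_add_right inner_scaleR_right)

lemma oproj_compl:
  fixes L :: "'a::euclidean_space set"
  assumes "subspace L" "C = {y. \<forall>z\<in>L. inner z y = 0}"
  shows "oproj C x = x - oproj L x"
proof -
  have sC: "subspace C" using assms(2) orth_subspace by simp
  have P: "oproj L x \<in> L" "\<forall>y\<in>L. inner (x - oproj L x) y = 0" using oproj_exists[OF assms(1)] by auto
  show ?thesis
  proof (rule oproj_unique[OF sC])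
    show "x - oproj L x \<in> C" using P(2) assms(2) by (simp add: inner_commute)
    show "\<forall>y\<in>C. inner (x - (x - oproj L x)) y = 0" using P(1) assms(2) by simp
  qed
qed

lemma stop1:
  assumes "stop_time C v (Suc 0) = enat t"
  shows "span (v ` {0..t}) = C"
proof -
  have ex: "\<exists>k. span (v ` {0..k}) = C" using assms by (auto split: if_splits)
  then have "t = (LEAST k. span (v ` {0..k}) = C)" using assms by simp
  then show ?thesis using LeastI_ex[OF ex] by simp
qed

lemma stopSS:
  assumes "stop_time C v (Suc (Suc l)) = enat t"
  shows "\<exists>t'. stop_time C v (Suc l) = enat t' \<and> t' < t \<and> span (v ` {t'<..t}) = C"
proof (cases "stop_time C v (Suc l)")
  case (enat t')
  have ex: "\<exists>k. t' < k \<and> span (v ` {t'<..k}) = C" using assms enat by (auto split: if_splits)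
  then have "t = (LEAST k. t' < k \<and> span (v ` {t'<..k}) = C)" using assms enat by simp
  then show ?thesis using LeastI_ex[OF ex] enat by simp
next
  case infinity
  then show ?thesis using assms by simp
qed

lemma stop_prev: "stop_time C v (Suc l) \<noteq> \<infinity> \<Longrightarrow> stop_time C v l \<noteq> \<infinity>"
proof (cases l)
  case 0 then show ?thesis by simp
next
  case (Suc m)
  assume "stop_time C v (Suc l) \<noteq> \<infinity>"
  then obtain t where "stop_time C v (Suc (Suc m)) = enat t" using Suc by auto
  then show ?thesis using stopSS Suc by fastforce
qed

lemma stop_mono_fin: "stop_time C v l \<noteq> \<infinity> \<Longrightarrow> l' \<le> l \<Longrightarrow> stop_time C v l' \<noteq> \<infinity>"
proof (induction l)
  case 0 then show ?case by simp
next
  case (Suc l)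
  show ?case
  proof (cases "l' = Suc l")
    case True then show ?thesis using Suc by simp
  next
    case False
    then have "l' \<le> l" using Suc.prems by simp
    moreover have "stop_time C v l \<noteq> \<infinity>" using Suc.prems stop_prev by blast
    ultimately show ?thesis using Suc.IH by blast
  qed
qed

lemma stop_ge: "stop_time C v l = enat t \<Longrightarrow> l \<le> t + 1"
proof (induction l arbitrary: t rule: nat_less_induct)
  case (1 l)
  show ?case
  proof (cases l)
    case 0 then show ?thesis by simp
  next
    case (Suc m)
    show ?thesis
    proof (cases m)
      case 0 then show ?thesis using Suc by simp
    next
      case (Suc m')
      obtain t' where t': "stop_time C v (Suc m') = enat t'" "t' < t"
        using stopSS[of C v m' t] 1(2) Suc \<open>l = Suc m\<close> by auto
      have "Suc m' \<le> t' + 1" using 1(1) t'(1) Suc \<open>l = Suc m\<close> by auto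
      then show ?thesis using t'(2) Suc \<open>l = Suc m\<close> by simp
    qed
  qed
qed

lemma iter_step:
  fixes A :: "real^'d^'n" and wq :: "nat \<Rightarrow> real^'d"
  assumes nz: "A *v wq k \<noteq> 0"
  shows "A *v kz_iter A b x0 wq (Suc k) - b
       = prj ((A *v wq k) /\<^sub>R norm (A *v wq k)) (A *v kz_iter A b x0 wq k - b)"
proof -
  define xk where "xk = kz_iter A b x0 wq k"
  define vv where "vv = A *v wq k"
  define y where "y = b - A *v xk"
  have key: "inner (wq k) (transpose A *v y) = inner vv y"
    unfolding vv_def transpose_matrix_vector by (metis dot_lmul_matrix inner_commute)
  have nv: "norm vv \<noteq> 0" using nz vv_def by simp
  define c where "c = inner vv y / (norm vv)\<^sup>2"
  have k1: "kz_iter A b x0 wq (Suc k) = xk + c *\<^sub>R wq k"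
    using key by (simp add: Let_def xk_def y_def c_def vv_def)
  have k2: "A *v kz_iter A b x0 wq (Suc k) - b = (A *v xk - b) + c *\<^sub>R vv"
    unfolding k1 vv_def by (simp add: matrix_vector_right_distrib matrix_vector_mult_scaleR)
  have k3: "inner (vv /\<^sub>R norm vv) (A *v xk - b) *\<^sub>R (vv /\<^sub>R norm vv) = (- c) *\<^sub>R vv"
  proof -
    have "A *v xk - b = - y" unfolding y_def by simp
    then have "inner (vv /\<^sub>R norm vv) (A *v xk - b) *\<^sub>R (vv /\<^sub>R norm vv)
        = ((- inner vv y) / norm vv / norm vv) *\<^sub>R vv"
      by (simp add: divide_inverse mult_ac)
    also have "\<dots> = (- c) *\<^sub>R vv" unfolding c_def by (simp add: power2_eq_square)
    finally show ?thesis .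
  qed
  have "A *v kz_iter A b x0 wq (Suc k) - b = prj (vv /\<^sub>R norm vv) (A *v xk - b)"
    unfolding k2 prj_def k3 by simp
  then show ?thesis unfolding xk_def vv_def .
qed

lemma resid_run:
  fixes A :: "real^'d^'n" and wq :: "nat \<Rightarrow> real^'d"
  assumes "\<forall>k. A *v wq k \<noteq> 0"
  shows "A *v kz_iter A b x0 wq k - b
       = run (map (\<lambda>j. (A *v wq j) /\<^sub>R norm (A *v wq j)) [0..<k]) (A *v kz_iter A b x0 wq 0 - b)"
proof (induction k)
  case 0 then show ?case by simp
next
  case (Suc k)
  then show ?case using iter_step[of A wq k b x0] assms by (simp add: run_snoc)
qed

lemma run_upt_split:
  "i \<le> j \<Longrightarrow> run (map u [0..<j]) z = run (map u [i..<j]) (run (map u [0..<i]) z)"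
proof -
  assume "i \<le> j"
  then have "[0..<j] = [0..<i] @ [i..<j]" by (metis le_add_diff_inverse upt_add_eq_append zero_le)
  then show ?thesis by (simp add: run_def)
qed

lemma block_bound:
  fixes v :: "nat \<Rightarrow> 'a::euclidean_space"
  assumes nz: "\<forall>k. v k \<noteq> 0" and spn: "span (v ` {a..t}) = C" and xin: "x \<in> C"
  shows "0 < Min (gram_det ` max_indep_cols ((\<lambda>j. v j /\<^sub>R norm (v j)) ` {a..t}))
    \<and> Min (gram_det ` max_indep_cols ((\<lambda>j. v j /\<^sub>R norm (v j)) ` {a..t})) \<le> 1
    \<and> (norm (run (map (\<lambda>j. v j /\<^sub>R norm (v j)) [a..<Suc t]) x))\<^sup>2
        \<le> (1 - Min (gram_det ` max_indep_cols ((\<lambda>j. v j /\<^sub>R norm (v j)) ` {a..t}))) * (norm x)\<^sup>2"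
proof -
  define u where "u = (\<lambda>j. v j /\<^sub>R norm (v j))"
  define S where "S = u ` {a..t}"
  define MI where "MI = max_indep_cols S"
  define us where "us = map u [a..<Suc t]"
  have setus: "set us = S" unfolding us_def S_def by (simp only: set_map set_upt atLeastLessThanSuc_atLeastAtMost)
  have Sn: "\<forall>y\<in>S. norm y = 1" unfolding S_def u_def using nz by auto
  have spS: "span S = C"
  proof -
    have "S \<subseteq> span (v ` {a..t})"
    proof
      fix y assume "y \<in> S"
      then obtain j where j: "j \<in> {a..t}" "y = u j" unfolding S_def by blast
      have "v j \<in> span (v ` {a..t})" using j by (intro span_base) blast
      then show "y \<in> span (v ` {a..t})" using j by (simp add: u_def span_scale)
    qed
    then have 1: "span S \<subseteq> span (v ` {a..t})" by (simp add: span_minimal)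
    have "v ` {a..t} \<subseteq> span S"
    proof
      fix y assume "y \<in> v ` {a..t}"
      then obtain j where j: "j \<in> {a..t}" "y = v j" by blast
      have "y = norm (v j) *\<^sub>R u j" using nz j by (simp add: u_def)
      moreover have "u j \<in> S" using j unfolding S_def by blast
      ultimately show "y \<in> span S" by (simp add: span_scale span_base)
    qed
    then have 2: "span (v ` {a..t}) \<subseteq> span S" by (simp add: span_minimal)
    show ?thesis using 1 2 spn by simp
  qed
  obtain F where F: "distinct F" "set F \<subseteq> set us" "independent (set F)" "span (set F) = span (set us)"
    and Fb: "\<forall>x\<in>span (set us). (norm (run us x))\<^sup>2 \<le> (1 - gram_det F) * (norm x)\<^sup>2"
    using meany[of us] Sn setus by blast
  have FMI: "F \<in> MI"
    unfolding MI_def max_indep_cols_def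
  proof (intro CollectI conjI allI impI)
    show "distinct F" "set F \<subseteq> S" "independent (set F)" using F setus by auto
    fix T assume T: "set F \<subseteq> T \<and> T \<subseteq> S \<and> independent T"
    show "T = set F"
    proof (rule ccontr)
      assume "T \<noteq> set F"
      then obtain y where y: "y \<in> T" "y \<notin> set F" using T by blast
      have "y \<in> span S" using y T span_base by blast
      then have "y \<in> span (set F)" using F(4) setus by simp
      moreover have "span (set F) \<subseteq> span (T - {y})" using T y by (intro span_mono) blast
      ultimately have "dependent T" using y(1) by (auto simp: dependent_def)
      then show False using T by blast
    qed
  qed
  have finS: "finite S" unfolding S_def by simp
  have finMI: "finite MI"
    by (rule finite_subset[OF _ finite_subset_distinct[OF finS]]) (auto simp: MI_def max_indep_cols_def)
  have bnd: "\<And>G. G \<in> MI \<Longrightarrow> 0 < gram_det G \<and> gram_det G \<le> 1"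
  proof -
    fix G assume "G \<in> MI"
    then have "distinct G" "independent (set G)" "set G \<subseteq> S" by (auto simp: MI_def max_indep_cols_def)
    then show "0 < gram_det G \<and> gram_det G \<le> 1" using gram_det_bounds Sn by blast
  qed
  have ne: "gram_det ` MI \<noteq> {}" using FMI by blast
  have fin2: "finite (gram_det ` MI)" using finMI by simp
  have Min_in: "Min (gram_det ` MI) \<in> gram_det ` MI" using Min_in[OF fin2 ne] .
  have Mpos: "0 < Min (gram_det ` MI)" "Min (gram_det ` MI) \<le> 1" using Min_in bnd by auto
  have Mle: "Min (gram_det ` MI) \<le> gram_det F" using FMI fin2 by simp
  have xus: "x \<in> span (set us)" using xin spS setus by simp
  have "(norm (run us x))\<^sup>2 \<le> (1 - gram_det F) * (norm x)\<^sup>2" using Fb xus by blast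
  also have "\<dots> \<le> (1 - Min (gram_det ` MI)) * (norm x)\<^sup>2" using Mle by (simp add: mult_right_mono)
  finally show ?thesis using Mpos unfolding MI_def S_def us_def u_def by simp
qed

lemma det_main:
  fixes A :: "real^'d^'n" and b :: "real^'n" and wq :: "nat \<Rightarrow> real^'d" and L C :: "(real^'n) set" and x0 :: "real^'d"
  assumes sL: "subspace L" and Cdef: "C = {y. \<forall>z\<in>L. inner z y = 0}"
    and inC: "\<forall>k. A *v wq k \<in> C" and nz: "\<forall>k. A *v wq k \<noteq> 0"
  defines "v \<equiv> (\<lambda>k. A *v wq k)"
    and "r \<equiv> (\<lambda>k. A *v kz_iter A b x0 wq k - b)"
  shows "(\<forall>l\<ge>1. stop_time C v l \<noteq> \<infinity> \<longrightarrow> gamma_blk C v l \<in> {0..<1})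
      \<and> (\<forall>l. stop_time C v l \<noteq> \<infinity> \<longrightarrow>
           (norm (r (the_enat (stop_time C v l) + 1) - oproj L (r 0)))\<^sup>2
             \<le> (\<Prod>j=1..l. gamma_blk C v j) * (norm (oproj C (r 0)))\<^sup>2)
      \<and> (\<forall>k\<ge>1. let Lk = Max {l. stop_time C v l + 1 \<le> enat k} in
           stop_time C v Lk \<noteq> \<infinity> \<longrightarrow>
           (norm (r k - oproj L (r 0)))\<^sup>2 \<le> (\<Prod>j=1..Lk. gamma_blk C v j) * (norm (oproj C (r 0)))\<^sup>2)"
proof -
  define u where "u = (\<lambda>j. v j /\<^sub>R norm (v j))"
  define T where "T = stop_time C v"
  define \<gamma> where "\<gamma> = gamma_blk C v"
  define l0 where "l0 = oproj L (r 0)"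
  define c0 where "c0 = oproj C (r 0)"
  define e where "e = (\<lambda>k. run (map u [0..<k]) c0)"
  have sC: "subspace C" using Cdef orth_subspace by simp
  have vnz: "\<forall>k. v k \<noteq> 0" using nz v_def by simp
  have un: "\<forall>j. norm (u j) = 1" using vnz u_def by simp
  have uC: "\<forall>j. u j \<in> C" using inC sC unfolding u_def v_def by (simp add: subspace_scale)
  have c0eq: "c0 = r 0 - l0" unfolding c0_def l0_def by (rule oproj_compl[OF sL Cdef])
  have l0L: "l0 \<in> L" unfolding l0_def using oproj_exists[OF sL] by blast
  have c0C: "c0 \<in> C" unfolding c0_def using oproj_exists[OF sC] by blast
  have uorth: "\<forall>j. inner (u j) l0 = 0" using uC l0L Cdef by (simp add: inner_commute)
  have rk: "\<And>k. r k - l0 = e k"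
  proof -
    fix k
    have "r k = run (map u [0..<k]) (r 0)"
      unfolding r_def using resid_run[of A wq b x0 k] nz unfolding u_def v_def by simp
    also have "r 0 = c0 + l0" using c0eq by simp
    also have "run (map u [0..<k]) (c0 + l0) = e k + l0"
      unfolding e_def using uorth by (intro run_add_orth) auto
    finally show "r k - l0 = e k" by simp
  qed
  have eC: "\<And>k. e k \<in> C"
  proof -
    fix k
    have "e k \<in> span C" unfolding e_def using uC c0C by (intro run_span) (auto simp: span_base)
    then show "e k \<in> C" using sC by (metis span_eq_iff)
  qed
  have emono: "\<And>i j. i \<le> j \<Longrightarrow> norm (e j) \<le> norm (e i)"
  proof -
    fix i j :: nat assume "i \<le> j"
    then have "e j = run (map u [i..<j]) (e i)" unfolding e_def by (rule run_upt_split)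
    then show "norm (e j) \<le> norm (e i)" using run_norm_le[of "map u [i..<j]" "e i"] un by simp
  qed
  have blk: "\<And>l t. 1 \<le> l \<Longrightarrow> T l = enat t \<Longrightarrow>
      span (v ` {blk_start C v l..t}) = C \<and> blk_start C v l \<le> t"
  proof -
    fix l t assume l: "1 \<le> l" and t: "T l = enat t"
    show "span (v ` {blk_start C v l..t}) = C \<and> blk_start C v l \<le> t"
    proof (cases "l = 1")
      case True
      then show ?thesis using stop1[of C v t] t by (simp add: T_def blk_start_def)
    next
      case False
      then obtain m where m: "l = Suc (Suc m)" using l by (metis One_nat_def Suc_le_D le_SucE not0_implies_Suc Suc_le_eq less_Suc0)
      obtain t' where t': "T (Suc m) = enat t'" "t' < t" "span (v ` {t'<..t}) = C"
        using stopSS[of C v m t] t m T_def by auto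
      have bs: "blk_start C v l = Suc t'" using m t' by (simp add: blk_start_def T_def)
      show ?thesis using bs t' by (simp add: atLeastSucAtMost_greaterThanAtMost)
    qed
  qed
  have blockb: "\<And>l t. 1 \<le> l \<Longrightarrow> T l = enat t \<Longrightarrow>
      0 \<le> \<gamma> l \<and> \<gamma> l < 1 \<and> (norm (e (Suc t)))\<^sup>2 \<le> \<gamma> l * (norm (e (blk_start C v l)))\<^sup>2"
  proof -
    fix l t assume l: "1 \<le> l" and t: "T l = enat t"
    define a where "a = blk_start C v l"
    have sp: "span (v ` {a..t}) = C" and at: "a \<le> t" using blk[OF l t] a_def by auto
    have g: "\<gamma> l = 1 - Min (gram_det ` max_indep_cols ((\<lambda>j. v j /\<^sub>R norm (v j)) ` {a..t}))"
      unfolding \<gamma>_def gamma_blk_def a_def using t T_def by simp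
    have es: "e (Suc t) = run (map (\<lambda>j. v j /\<^sub>R norm (v j)) [a..<Suc t]) (e a)"
      unfolding e_def u_def using at by (intro run_upt_split) simp
    show "0 \<le> \<gamma> l \<and> \<gamma> l < 1 \<and> (norm (e (Suc t)))\<^sup>2 \<le> \<gamma> l * (norm (e (blk_start C v l)))\<^sup>2"
      using block_bound[OF vnz sp eC[of a]] unfolding g es a_def[symmetric] by simp
  qed
  have claim1: "\<forall>l\<ge>1. T l \<noteq> \<infinity> \<longrightarrow> \<gamma> l \<in> {0..<1}"
    using blockb by fastforce
  have claim2: "\<And>l. T l \<noteq> \<infinity> \<Longrightarrow> (norm (e (the_enat (T l) + 1)))\<^sup>2 \<le> (\<Prod>j=1..l. \<gamma> j) * (norm c0)\<^sup>2"
  proof -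
    fix l show "T l \<noteq> \<infinity> \<Longrightarrow> (norm (e (the_enat (T l) + 1)))\<^sup>2 \<le> (\<Prod>j=1..l. \<gamma> j) * (norm c0)\<^sup>2"
    proof (induction l)
      case 0
      have "norm (e 1) \<le> norm (e 0)" by (rule emono) simp
      then have "(norm (e 1))\<^sup>2 \<le> (norm (e 0))\<^sup>2" by (simp add: power_mono)
      then show ?case by (simp add: T_def e_def zero_enat_def)
    next
      case (Suc l)
      obtain t where t: "T (Suc l) = enat t" using Suc.prems by auto
      have B: "0 \<le> \<gamma> (Suc l)" "(norm (e (Suc t)))\<^sup>2 \<le> \<gamma> (Suc l) * (norm (e (blk_start C v (Suc l))))\<^sup>2"
        using blockb[of "Suc l" t] t by auto
      show ?case
      proof (cases l)
        case 0
        have "blk_start C v (Suc l) = 0" using 0 by (simp add: blk_start_def)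
        then show ?thesis using B t 0 by (simp add: e_def)
      next
        case (Suc m)
        obtain t' where t': "T l = enat t'" using stopSS[of C v m t] t Suc T_def by auto
        have bs: "blk_start C v (Suc l) = t' + 1" using Suc t' by (simp add: blk_start_def T_def)
        have IH: "(norm (e (t' + 1)))\<^sup>2 \<le> (\<Prod>j=1..l. \<gamma> j) * (norm c0)\<^sup>2"
          using Suc.IH t' by simp
        have "(norm (e (Suc t)))\<^sup>2 \<le> \<gamma> (Suc l) * (norm (e (t' + 1)))\<^sup>2"
          using B(2) bs by simp
        also have "\<dots> \<le> \<gamma> (Suc l) * ((\<Prod>j=1..l. \<gamma> j) * (norm c0)\<^sup>2)"
          by (rule mult_left_mono[OF IH B(1)])
        finally have "(norm (e (Suc t)))\<^sup>2 \<le> \<gamma> (Suc l) * ((\<Prod>j=1..l. \<gamma> j) * (norm c0)\<^sup>2)" .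
        then show ?thesis using t by (simp add: mult_ac)
      qed
    qed
  qed
  have claim3: "\<forall>k\<ge>1. let Lk = Max {l. T l + 1 \<le> enat k} in
           T Lk \<noteq> \<infinity> \<longrightarrow> (norm (e k))\<^sup>2 \<le> (\<Prod>j=1..Lk. \<gamma> j) * (norm c0)\<^sup>2"
  proof (intro allI impI)
    fix k :: nat assume k: "1 \<le> k"
    define Sk where "Sk = {l. T l + 1 \<le> enat k}"
    have sub: "Sk \<subseteq> {..k}"
    proof
      fix l assume "l \<in> Sk"
      then obtain t where t: "T l = enat t" "t + 1 \<le> k" unfolding Sk_def
        by (cases "T l") (auto simp: one_enat_def)
      then show "l \<in> {..k}" using stop_ge[of C v l t] T_def by simp
    qed
    have fin: "finite Sk" using sub finite_subset by blast
    have "0 \<in> Sk" using k unfolding Sk_def T_def by (simp add: one_enat_def)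
    then have Lin: "Max Sk \<in> Sk" using fin Max_in by blast
    then have h: "T (Max Sk) + 1 \<le> enat k" unfolding Sk_def by blast
    obtain t where t: "T (Max Sk) = enat t" "t + 1 \<le> k"
      using h by (cases "T (Max Sk)") (auto simp: one_enat_def)
    have "norm (e k) \<le> norm (e (t + 1))" using t by (intro emono) simp
    then have "(norm (e k))\<^sup>2 \<le> (norm (e (t + 1)))\<^sup>2" by (simp add: power_mono)
    also have "\<dots> \<le> (\<Prod>j=1..Max Sk. \<gamma> j) * (norm c0)\<^sup>2" using claim2[of "Max Sk"] t by simp
    finally show "let Lk = Max {l. T l + 1 \<le> enat k} in
           T Lk \<noteq> \<infinity> \<longrightarrow> (norm (e k))\<^sup>2 \<le> (\<Prod>j=1..Lk. \<gamma> j) * (norm c0)\<^sup>2"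
      unfolding Sk_def Let_def by simp
  qed
  have rk': "\<And>k. r k - oproj L (r 0) = e k" using rk l0_def by simp
  show ?thesis
    using claim1 claim2 claim3 unfolding rk' c0_def[symmetric] T_def \<gamma>_def by auto
qed

theorem mainTheorem12:
  fixes M :: "'s measure" and A :: "real^'d^'n" and b :: "real^'n"
    and w :: "'s \<Rightarrow> real^'d" and ws :: "nat \<Rightarrow> 's \<Rightarrow> real^'d" and x0 :: "real^'d"
  assumes "prob_space M"
    and "\<exists>xs. A *v xs = b"
    and "w \<in> borel_measurable M"
    and "\<forall>l. ws l \<in> borel_measurable M"
    and "\<forall>l. measure M {\<omega> \<in> space M. A *v ws l \<omega> \<in> Csp A M w} = 1"
    and "AE \<omega> in M. \<forall>k. A *v ws k \<omega> \<noteq> 0"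
  shows "AE \<omega> in M.
    (let v = (\<lambda>k. A *v ws k \<omega>); C = Csp A M w; L = Lsp A M w;
         r = (\<lambda>k. A *v kz_iter A b x0 (\<lambda>j. ws j \<omega>) k - b);
         \<tau> = stop_time C v; \<gamma> = gamma_blk C v
     in (\<forall>l\<ge>1. \<tau> l \<noteq> \<infinity> \<longrightarrow> \<gamma> l \<in> {0..<1})
      \<and> (\<forall>l. \<tau> l \<noteq> \<infinity> \<longrightarrow>
           (norm (r (the_enat (\<tau> l) + 1) - oproj L (r 0)))^2
             \<le> (\<Prod>j=1..l. \<gamma> j) * (norm (oproj C (r 0)))^2)
      \<and> (\<forall>k\<ge>1. let Lk = Max {l. \<tau> l + 1 \<le> enat k} in
           \<tau> Lk \<noteq> \<infinity> \<longrightarrow>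
           (norm (r k - oproj L (r 0)))^2 \<le> (\<Prod>j=1..Lk. \<gamma> j) * (norm (oproj C (r 0)))^2))"
proof -
  note P = assms(1)
  define C where "C = Csp A M w"
  define L where "L = Lsp A M w"
  have sL: "subspace L" unfolding L_def Lsp_def by (rule subspace_span)
  have Cdef: "C = {y. \<forall>z\<in>L. inner z y = 0}" unfolding C_def Csp_def L_def ..
  have cC: "closed C" unfolding Cdef by (rule closed_subspace[OF orth_subspace])
  have meas: "\<And>l. {\<omega> \<in> space M. A *v ws l \<omega> \<in> C} \<in> sets M"
  proof -
    fix l
    have lin: "(\<lambda>x. A *v x) \<in> borel_measurable borel"
      by (rule borel_measurable_continuous_onI) (rule matrix_vector_mult_linear_continuous_on)
    have wsl: "ws l \<in> borel_measurable M" using assms(4) by blast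
    have f: "(\<lambda>\<omega>. A *v ws l \<omega>) \<in> borel_measurable M"
      by (rule measurable_compose[OF wsl lin])
    have "(\<lambda>\<omega>. A *v ws l \<omega>) -` C \<inter> space M \<in> sets M"
      by (rule measurable_sets[OF f]) (simp add: borel_closed cC)
    moreover have "(\<lambda>\<omega>. A *v ws l \<omega>) -` C \<inter> space M = {\<omega> \<in> space M. A *v ws l \<omega> \<in> C}" by blast
    ultimately show "{\<omega> \<in> space M. A *v ws l \<omega> \<in> C} \<in> sets M" by simp
  qed
  have AE1: "\<And>l. AE \<omega> in M. A *v ws l \<omega> \<in> C"
  proof -
    fix l
    have "AE \<omega> in M. \<omega> \<in> {\<omega> \<in> space M. A *v ws l \<omega> \<in> C}"
      using prob_space.AE_in_set_eq_1[OF P meas[of l]] assms(5) C_def by simp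
    then show "AE \<omega> in M. A *v ws l \<omega> \<in> C" by (rule eventually_mono) simp
  qed
  have AE2: "AE \<omega> in M. \<forall>l. A *v ws l \<omega> \<in> C" using AE1 by (simp add: AE_all_countable)
  show ?thesis
    using AE2 assms(6)
  proof (eventually_elim)
    case (elim \<omega>)
    have "\<forall>k. A *v (\<lambda>j. ws j \<omega>) k \<in> C" "\<forall>k. A *v (\<lambda>j. ws j \<omega>) k \<noteq> 0" using elim by auto
    note D = det_main[OF sL Cdef this, of b x0]
    show ?case using D unfolding Let_def C_def L_def .
  qed
qed

end
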